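(* Let $n$ be a positive integer. (a) $\mu(n,3)=\mu(n,2)$. (b) If $n\ge 3$, then $\mu^*(n,3)=4k-1$ if $n=6k-3$ for some positive integer $k$, and $\mu^*(n,3)=\mu(n,3)$ otherwise.
   Context: Let $\mathbb F_2=\{0,1\}$ be the field with two elements. For $u\in\mathbb F_2^n$, $|u|$ denotes the Hamming weight of $u$ (the number of entries equal to $1$). A wiring on $n$ vertices is a matrix $W=(w_{i,j})\in M(n,n;\mathbb F_2)$ with $w_{i,i}=1$ for all $i$. The degree of vertex $j$ is the number of $1$s in the $j$th column of $W$, and $\deg(W)$ is the maximum degree over all vertices. For $c\in\mathbb F_2^n$, $M(W,c)=\max\{|Wx+c| : x\in\mathbb F_2^n\}$. For $n,m\ge1$, $A(n,m)$ is the set of wirings on $n$ vertices with $\deg(W)\le m$; for $n\ge m$, $A^*(n,m)$ is the set of wirings on $n$ vertices in which every vertex has degree exactly $m$. Define $\mu(n,m)=\min\{M(W,0): W\in A(n,m)\}$ and, for $n\ge m$, $\mu^*(n,m)=\min\{M(W,0): W\in A^*(n,m)\}$. *)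

theory Defs
  imports Main
begin

text \<open>Vectors in F_2^n are functions nat => bool read only on {0..<n};
  an n x n matrix over F_2 is a function nat => nat => bool (row i, column j),
  read only on indices < n; we require it to be False outside, so that the
  set of wirings is a genuine finite set of matrices.\<close>

definition is_matrix :: "nat \<Rightarrow> (nat \<Rightarrow> nat \<Rightarrow> bool) \<Rightarrow> bool" where
  "is_matrix n W \<longleftrightarrow> (\<forall>i j. W i j \<longrightarrow> i < n \<and> j < n)"

definition is_wiring :: "nat \<Rightarrow> (nat \<Rightarrow> nat \<Rightarrow> bool) \<Rightarrow> bool" where
  "is_wiring n W \<longleftrightarrow> is_matrix n W \<and> (\<forall>i<n. W i i)"

definition vdeg :: "nat \<Rightarrow> (nat \<Rightarrow> nat \<Rightarrow> bool) \<Rightarrow> nat \<Rightarrow> nat" where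
  "vdeg n W j = card {i. i < n \<and> W i j}"

definition mv_entry :: "nat \<Rightarrow> (nat \<Rightarrow> nat \<Rightarrow> bool) \<Rightarrow> (nat \<Rightarrow> bool) \<Rightarrow> (nat \<Rightarrow> bool) \<Rightarrow> nat \<Rightarrow> bool" where
  "mv_entry n W x c i \<longleftrightarrow> (odd (card {j. j < n \<and> W i j \<and> x j}) \<noteq> c i)"

definition weight_Wxc :: "nat \<Rightarrow> (nat \<Rightarrow> nat \<Rightarrow> bool) \<Rightarrow> (nat \<Rightarrow> bool) \<Rightarrow> (nat \<Rightarrow> bool) \<Rightarrow> nat" where
  "weight_Wxc n W x c = card {i. i < n \<and> mv_entry n W x c i}"

definition M :: "nat \<Rightarrow> (nat \<Rightarrow> nat \<Rightarrow> bool) \<Rightarrow> (nat \<Rightarrow> bool) \<Rightarrow> nat" where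
  "M n W c = Max {weight_Wxc n W x c | x. \<forall>j. x j \<longrightarrow> j < n}"

definition A :: "nat \<Rightarrow> nat \<Rightarrow> (nat \<Rightarrow> nat \<Rightarrow> bool) set" where
  "A n m = {W. is_wiring n W \<and> (\<forall>j<n. vdeg n W j \<le> m)}"

definition A_star :: "nat \<Rightarrow> nat \<Rightarrow> (nat \<Rightarrow> nat \<Rightarrow> bool) set" where
  "A_star n m = {W. is_wiring n W \<and> (\<forall>j<n. vdeg n W j = m)}"

definition mu :: "nat \<Rightarrow> nat \<Rightarrow> nat" where
  "mu n m = Min ((\<lambda>W. M n W (\<lambda>_. False)) ` A n m)"

definition mu_star :: "nat \<Rightarrow> nat \<Rightarrow> nat" where
  "mu_star n m = Min ((\<lambda>W. M n W (\<lambda>_. False)) ` A_star n m)"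

end

theory Submission
  imports Defs
begin


definition Y :: "nat \<Rightarrow> (nat \<Rightarrow> nat \<Rightarrow> bool) \<Rightarrow> (nat \<Rightarrow> bool) \<Rightarrow> nat set" where
  "Y n W x = {i. i < n \<and> odd (card {j. j < n \<and> W i j \<and> x j})}"

definition col :: "nat \<Rightarrow> (nat \<Rightarrow> nat \<Rightarrow> bool) \<Rightarrow> nat \<Rightarrow> nat set" where
  "col n W j = {i. i < n \<and> W i j}"

definition supp :: "nat \<Rightarrow> (nat \<Rightarrow> bool) \<Rightarrow> bool" where
  "supp n x \<longleftrightarrow> (\<forall>j. x j \<longrightarrow> j < n)"

lemma weight_Y: "weight_Wxc n W x (\<lambda>_. False) = card (Y n W x)"
  by (simp add: weight_Wxc_def mv_entry_def Y_def)

lemma Y_sub: "Y n W x \<subseteq> {..<n}" by (auto simp: Y_def)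
lemma fin_Y[simp]: "finite (Y n W x)" by (rule finite_subset[OF Y_sub]) auto

lemma card_Y_le: "card (Y n W x) \<le> n"
  using card_mono[OF _ Y_sub, of n W x] by simp

lemma weight_le: "weight_Wxc n W x c \<le> n"
proof -
  have "{i. i < n \<and> mv_entry n W x c i} \<subseteq> {..<n}" by auto
  from card_mono[OF _ this] show ?thesis by (simp add: weight_Wxc_def)
qed

lemma Mset_fin: "finite {weight_Wxc n W x c | x. \<forall>j. x j \<longrightarrow> j < n}"
proof (rule finite_subset[of _ "{..n}"])
  show "{weight_Wxc n W x c | x. \<forall>j. x j \<longrightarrow> j < n} \<subseteq> {..n}"
  proof
    fix u assume "u \<in> {weight_Wxc n W x c | x. \<forall>j. x j \<longrightarrow> j < n}"
    then obtain x where "u = weight_Wxc n W x c" by blast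
    then show "u \<in> {..n}" using weight_le[of n W x c] by simp
  qed
qed simp

lemma Mset_ne: "{weight_Wxc n W x c | x. \<forall>j. x j \<longrightarrow> j < n} \<noteq> {}"
proof -
  have "weight_Wxc n W (\<lambda>_. False) c \<in> {weight_Wxc n W x c | x. \<forall>j. x j \<longrightarrow> j < n}"
    by (rule CollectI) (rule exI[of _ "\<lambda>_. False"], simp)
  then show ?thesis by (rule ex_in_conv[THEN iffD1, OF exI]) 
qed

lemma M_ge: "supp n x \<Longrightarrow> weight_Wxc n W x c \<le> M n W c"
  unfolding M_def supp_def
  by (rule Max_ge[OF Mset_fin], rule CollectI, rule exI[of _ x], simp)

lemma M_attained: "\<exists>x. supp n x \<and> weight_Wxc n W x c = M n W c"
proof -
  have "M n W c \<in> {weight_Wxc n W x c | x. \<forall>j. x j \<longrightarrow> j < n}"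
    unfolding M_def by (rule Max_in[OF Mset_fin Mset_ne])
  then obtain x where "M n W c = weight_Wxc n W x c" "\<forall>j. x j \<longrightarrow> j < n" by blast
  then show ?thesis unfolding supp_def by auto
qed

lemma M_le: "(\<And>x. supp n x \<Longrightarrow> weight_Wxc n W x c \<le> b) \<Longrightarrow> M n W c \<le> b"
proof -
  assume h: "\<And>x. supp n x \<Longrightarrow> weight_Wxc n W x c \<le> b"
  obtain x where "supp n x" "weight_Wxc n W x c = M n W c" using M_attained by blast
  with h[of x] show ?thesis by simp
qed

lemma M_le_n: "M n W c \<le> n"
  by (rule M_le) (rule weight_le)

lemma odd_card_symdiff:
  assumes "finite S" "finite T"
  shows "odd (card ((S - T) \<union> (T - S))) \<longleftrightarrow> (odd (card S) \<noteq> odd (card T))"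
proof -
  have d: "card ((S - T) \<union> (T - S)) = card (S - T) + card (T - S)"
    by (rule card_Un_disjoint) (use assms in auto)
  have a: "card S = card (S \<inter> T) + card (S - T)" using card_Int_Diff[OF assms(1)] .
  have b: "card T = card (S \<inter> T) + card (T - S)" using card_Int_Diff[OF assms(2), of S]
    by (simp add: Int_commute)
  have e: "card ((S - T) \<union> (T - S)) + 2 * card (S \<inter> T) = card S + card T"
    using d a b by simp
  show ?thesis
  proof -
    fix p q r u :: nat
    have "p + 2 * q = r + u \<Longrightarrow> odd p \<longleftrightarrow> (odd r \<noteq> odd u)" for p q r u :: nat
      by presburger
    from this[OF e] show ?thesis .
  qed
qed

lemma Y_xor: "Y n W (\<lambda>k. x k \<noteq> z k) = (Y n W x - Y n W z) \<union> (Y n W z - Y n W x)"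
proof -
  { fix i
    define P where "P = {j. j < n \<and> W i j \<and> x j}"
    define Q where "Q = {j. j < n \<and> W i j \<and> z j}"
    have e: "{j. j < n \<and> W i j \<and> (x j \<noteq> z j)} = (P - Q) \<union> (Q - P)"
      unfolding P_def Q_def by auto
    have "odd (card ((P - Q) \<union> (Q - P))) \<longleftrightarrow> (odd (card P) \<noteq> odd (card Q))"
      by (rule odd_card_symdiff) (auto simp: P_def Q_def)
    then have "odd (card {j. j < n \<and> W i j \<and> (x j \<noteq> z j)}) \<longleftrightarrow>
       (odd (card {j. j < n \<and> W i j \<and> x j}) \<noteq> odd (card {j. j < n \<and> W i j \<and> z j}))"
      unfolding e P_def Q_def .
  } note h = this
  show ?thesis
    apply (rule set_eqI)
    unfolding Y_def mem_Collect_eq Un_iff Diff_iff h by blast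
qed

lemma Y_unit: "j < n \<Longrightarrow> Y n W (\<lambda>k. k = j) = col n W j"
proof -
  assume j: "j < n"
  have h: "\<And>i. odd (card {k. k < n \<and> W i k \<and> k = j}) \<longleftrightarrow> W i j"
  proof -
    fix i
    have "{k. k < n \<and> W i k \<and> k = j} = (if W i j then {j} else {})" using j by auto
    then show "odd (card {k. k < n \<and> W i k \<and> k = j}) \<longleftrightarrow> W i j" by simp
  qed
  show ?thesis unfolding Y_def col_def h ..
qed




lemma Y_empty: "Y n W (\<lambda>k. False) = {}" by (simp add: Y_def)

lemma Y_parity:
  assumes "\<forall>j<n. odd (card (col n W j))" "finite S" "S \<subseteq> {..<n}"
  shows "odd (card (Y n W (\<lambda>k. k \<in> S))) = odd (card S)"
  using assms(2,3)
proof (induction S rule: finite_induct)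
  case empty
  then show ?case by (simp add: Y_empty)
next
  case (insert a F)
  have a: "a < n" using insert.prems by auto
  have e: "(\<lambda>k. k \<in> insert a F) = (\<lambda>k. (k \<in> F) \<noteq> (k = a))" using insert.hyps(2) by auto
  have "Y n W (\<lambda>k. k \<in> insert a F) = (Y n W (\<lambda>k. k \<in> F) - col n W a) \<union> (col n W a - Y n W (\<lambda>k. k \<in> F))"
    unfolding e Y_xor Y_unit[OF a] ..
  moreover have "odd (card ((Y n W (\<lambda>k. k \<in> F) - col n W a) \<union> (col n W a - Y n W (\<lambda>k. k \<in> F))))
     = (odd (card (Y n W (\<lambda>k. k \<in> F))) \<noteq> odd (card (col n W a)))"
    by (rule odd_card_symdiff) (auto simp: col_def)
  ultimately show ?case using insert assms(1) a by simp
qed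

lemma vdeg_col: "vdeg n W j = card (col n W j)" by (simp add: vdeg_def col_def)
lemma fin_col[simp]: "finite (col n W j)" by (simp add: col_def)

lemma key:
  assumes W: "W \<in> A n 3"
  shows "\<exists>m s. m = n - M n W (\<lambda>_. False) \<and> m + s \<le> M n W (\<lambda>_. False) \<and>
     m + (M n W (\<lambda>_. False) - s) \<le> M n W (\<lambda>_. False) \<and> s \<le> M n W (\<lambda>_. False) \<and>
     ((\<forall>j<n. vdeg n W j = 3) \<longrightarrow> odd (m + s) = odd m)"
proof -
  define MM where "MM = M n W (\<lambda>_. False)"
  have mat: "\<And>i j. W i j \<Longrightarrow> i < n \<and> j < n" and diag: "\<And>j. j < n \<Longrightarrow> W j j"
    and deg: "\<And>j. j < n \<Longrightarrow> card (col n W j) \<le> 3"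
    using W by (auto simp: A_def is_wiring_def is_matrix_def vdeg_col)
  obtain x0 where x0: "supp n x0" "card (Y n W x0) = MM"
    using M_attained[of n W "\<lambda>_. False"] unfolding MM_def weight_Y by blast
  have Mge: "\<And>x. supp n x \<Longrightarrow> card (Y n W x) \<le> MM"
    unfolding MM_def using M_ge weight_Y by metis
  define y where "y = Y n W x0"
  define Z where "Z = {..<n} - y"
  have ysub: "y \<subseteq> {..<n}" unfolding y_def by (rule Y_sub)
  have claim: "\<And>i j. i \<in> Z \<Longrightarrow> j \<in> Z \<Longrightarrow> W i j \<Longrightarrow> i = j"
  proof (rule ccontr)
    fix i j assume i: "i \<in> Z" and j: "j \<in> Z" and w: "W i j" and ne: "i \<noteq> j"
    have jn: "j < n" using j Z_def by auto
    define C where "C = col n W j"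
    have sx: "supp n (\<lambda>k. x0 k \<noteq> (k = j))" using x0(1) jn by (auto simp: supp_def)
    have YC: "Y n W (\<lambda>k. x0 k \<noteq> (k = j)) = (y - C) \<union> (C - y)"
      unfolding Y_xor Y_unit[OF jn] y_def C_def ..
    have c3: "card C \<le> 3" using deg[OF jn] C_def by simp
    have ij: "{i, j} \<subseteq> C - y" using i j w diag[OF jn] mat[OF w] unfolding C_def col_def Z_def by auto
    have fC: "finite C" by (simp add: C_def)
    have c2: "card (C - y) \<ge> 2" using card_mono[OF _ ij] ne fC by simp
    have "card C = card (C \<inter> y) + card (C - y)" using card_Int_Diff[OF fC] .
    then have cy: "card (C \<inter> y) \<le> 1" using c2 c3 by simp
    have "card y = card (y \<inter> C) + card (y - C)" using card_Int_Diff[of y C] ysub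
      by (simp add: y_def)
    then have "card (y - C) + 1 \<ge> MM" using cy x0(2) y_def by (simp add: Int_commute)
    moreover have "card ((y - C) \<union> (C - y)) = card (y - C) + card (C - y)"
      by (rule card_Un_disjoint) (auto simp: y_def fC)
    moreover have "card ((y - C) \<union> (C - y)) \<le> MM" using Mge[OF sx] YC by simp
    ultimately show False using c2 by simp
  qed
  define y2 where "y2 = Y n W (\<lambda>k. k \<in> Z)"
  have sx2: "supp n (\<lambda>k. k \<in> Z)" by (auto simp: supp_def Z_def)
  have Zy2: "Z \<subseteq> y2"
  proof
    fix i assume i: "i \<in> Z"
    then have "{j. j < n \<and> W i j \<and> j \<in> Z} = {i}" using claim diag Z_def by auto
    then show "i \<in> y2" using i Z_def by (simp add: y2_def Y_def)
  qed
  have y2sub: "y2 \<subseteq> {..<n}" unfolding y2_def by (rule Y_sub)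
  define s where "s = card (y \<inter> y2)"
  have fy: "finite y" "finite y2" "finite Z" using ysub y2sub by (auto simp: Z_def y_def y2_def)
  have "y2 = Z \<union> (y \<inter> y2)" using Zy2 y2sub Z_def by auto
  then have cy2: "card y2 = card Z + s" unfolding s_def
    by (metis card_Un_disjoint fy Z_def Diff_disjoint Int_Un_distrib Int_commute Un_Int_eq(2) finite_Int Int_assoc inf_bot_right)
  have "Y n W (\<lambda>k. x0 k \<noteq> (k \<in> Z)) = (y - y2) \<union> (y2 - y)" unfolding Y_xor y_def y2_def ..
  also have "y2 - y = Z" using Zy2 y2sub Z_def by auto
  finally have Y3: "Y n W (\<lambda>k. x0 k \<noteq> (k \<in> Z)) = (y - y2) \<union> Z" .
  have sx3: "supp n (\<lambda>k. x0 k \<noteq> (k \<in> Z))" using x0(1) by (auto simp: supp_def Z_def)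
  have "card ((y - y2) \<union> Z) = card (y - y2) + card Z"
    by (rule card_Un_disjoint) (auto simp: fy Z_def)
  moreover have "card y = s + card (y - y2)" unfolding s_def using card_Int_Diff[OF fy(1)] .
  ultimately have c3: "card (Y n W (\<lambda>k. x0 k \<noteq> (k \<in> Z))) = (MM - s) + card Z"
    using Y3 x0(2) y_def by simp
  have cZ: "card Z = n - MM" unfolding Z_def using card_Diff_subset[OF _ ysub] x0(2) y_def by simp
  have sle: "s \<le> MM" unfolding s_def using card_mono[OF fy(1), of "y \<inter> y2"] x0(2) y_def by simp
  have A1: "card Z + s \<le> MM" using Mge[OF sx2] cy2 y2_def by simp
  have A2: "card Z + (MM - s) \<le> MM" using Mge[OF sx3] c3 by simp
  have par: "(\<forall>j<n. vdeg n W j = 3) \<longrightarrow> odd (card Z + s) = odd (card Z)"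
  proof
    assume "\<forall>j<n. vdeg n W j = 3"
    then have "\<forall>j<n. odd (card (col n W j))" by (simp add: vdeg_col)
    from Y_parity[OF this fy(3)] have "odd (card y2) = odd (card Z)"
      unfolding y2_def Z_def by auto
    then show "odd (card Z + s) = odd (card Z)" using cy2 by simp
  qed
  show ?thesis unfolding MM_def[symmetric]
    by (rule exI[of _ "card Z"], rule exI[of _ s]) (use cZ A1 A2 sle par in auto)
qed

lemma lower:
  assumes "W \<in> A n 3" shows "2 * n \<le> 3 * M n W (\<lambda>_. False)"
proof -
  from key[OF assms] obtain m s where h: "m = n - M n W (\<lambda>_. False)" "m + s \<le> M n W (\<lambda>_. False)"
     "m + (M n W (\<lambda>_. False) - s) \<le> M n W (\<lambda>_. False)" "s \<le> M n W (\<lambda>_. False)" by blast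
  have "M n W (\<lambda>_. False) \<le> n" by (rule M_le_n)
  with h show ?thesis by linarith
qed

lemma exc:
  assumes "W \<in> A_star n 3" "k \<ge> 1" "n = 6 * k - 3"
  shows "4 * k - 1 \<le> M n W (\<lambda>_. False)"
proof -
  have W: "W \<in> A n 3" using assms(1) by (auto simp: A_def A_star_def)
  from key[OF W] obtain m s where h: "m = n - M n W (\<lambda>_. False)" "m + s \<le> M n W (\<lambda>_. False)"
     "m + (M n W (\<lambda>_. False) - s) \<le> M n W (\<lambda>_. False)" "s \<le> M n W (\<lambda>_. False)"
     "(\<forall>j<n. vdeg n W j = 3) \<longrightarrow> odd (m + s) = odd m" by blast
  have d: "\<forall>j<n. vdeg n W j = 3" using assms(1) by (auto simp: A_star_def)
  have p: "odd (m + s) = odd m" using h(5) d by simp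
  have l: "2 * n \<le> 3 * M n W (\<lambda>_. False)" by (rule lower[OF W])
  have "M n W (\<lambda>_. False) \<le> n" by (rule M_le_n)
  show ?thesis
  proof (rule ccontr)
    assume "\<not> ?thesis"
    then have "M n W (\<lambda>_. False) = 4 * k - 2" using l assms(2,3) by linarith
    then have "m = 2 * k - 1" "s = 2 * k - 1" using h assms(2,3) by linarith+
    then show False using p assms(2) by presburger
  qed
qed




definition blk :: "nat list list \<Rightarrow> nat \<Rightarrow> nat \<Rightarrow> bool" where
  "blk L = (\<lambda>i j. j < length L \<and> i \<in> set (L ! j))"

definition wl :: "nat list list \<Rightarrow> bool list \<Rightarrow> nat" where
  "wl L xs = length (filter (\<lambda>i. odd (length (filter (\<lambda>j. i \<in> set (L ! j) \<and> xs ! j) [0..<length L]))) [0..<length L])"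

definition goodblk :: "nat list list \<Rightarrow> bool" where
  "goodblk L \<longleftrightarrow> (\<forall>j\<in>set [0..<length L]. j \<in> set (L ! j) \<and> (\<forall>i\<in>set (L ! j). i < length L) \<and> distinct (L ! j))"

lemma card_filter_upt: "card {j. j < n \<and> P j} = length (filter P [0..<n])"
proof -
  have "{j. j < n \<and> P j} = set (filter P [0..<n])" by auto
  then show ?thesis using distinct_card[of "filter P [0..<n]"] by simp
qed

lemma card_Y_blk: "card (Y (length L) (blk L) x) = wl L (map x [0..<length L])"
proof -
  let ?n = "length L"
  have "\<And>i. card {j. j < ?n \<and> blk L i j \<and> x j} = length (filter (\<lambda>j. i \<in> set (L ! j) \<and> map x [0..<?n] ! j) [0..<?n])"
  proof -
    fix i
    have "{j. j < ?n \<and> blk L i j \<and> x j} = {j. j < ?n \<and> (i \<in> set (L ! j) \<and> map x [0..<?n] ! j)}"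
      by (auto simp: blk_def)
    then show "card {j. j < ?n \<and> blk L i j \<and> x j} = length (filter (\<lambda>j. i \<in> set (L ! j) \<and> map x [0..<?n] ! j) [0..<?n])"
      using card_filter_upt by simp
  qed
  then have "Y ?n (blk L) x = {i. i < ?n \<and> odd (length (filter (\<lambda>j. i \<in> set (L ! j) \<and> map x [0..<?n] ! j) [0..<?n]))}"
    unfolding Y_def by simp
  then show ?thesis unfolding wl_def using card_filter_upt by simp
qed

lemma M_blk:
  assumes "\<forall>xs\<in>set (List.n_lists (length L) [True, False]). wl L xs \<le> b"
  shows "M (length L) (blk L) (\<lambda>_. False) \<le> b"
proof (rule M_le)
  fix x
  have "map x [0..<length L] \<in> set (List.n_lists (length L) [True, False])"
    by (simp add: set_n_lists) (auto)
  then show "weight_Wxc (length L) (blk L) x (\<lambda>_. False) \<le> b"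
    using assms by (simp add: weight_Y card_Y_blk)
qed

lemma blk_wiring: "goodblk L \<Longrightarrow> is_wiring (length L) (blk L)"
  unfolding goodblk_def is_wiring_def is_matrix_def blk_def by auto

lemma blk_vdeg: "goodblk L \<Longrightarrow> j < length L \<Longrightarrow> vdeg (length L) (blk L) j = length (L ! j)"
proof -
  assume g: "goodblk L" and j: "j < length L"
  have "{i. i < length L \<and> blk L i j} = set (L ! j)" using g j unfolding goodblk_def blk_def by auto
  then show ?thesis using g j unfolding goodblk_def vdeg_def by (simp add: distinct_card)
qed

definition L_cyc :: "nat list list" where "L_cyc = [[0,1],[1,2],[2,0]]"
definition L_1 :: "nat list list" where "L_1 = [[0]]"
definition L_2 :: "nat list list" where "L_2 = [[0],[1]]"
definition L_3 :: "nat list list" where "L_3 = [[0,1,2],[0,1,2],[0,1,2]]"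
definition L_4 :: "nat list list" where "L_4 = [[0,1,2],[0,1,2],[0,1,2],[0,1,3]]"
definition L_5 :: "nat list list" where "L_5 = [[0,2,3],[1,2,4],[0,1,2],[2,3,4],[1,2,4]]"
definition L_6 :: "nat list list" where "L_6 = [[0,1,2],[0,1,2],[0,1,2],[0,3,4],[0,3,4],[1,3,5]]"
definition L_7 :: "nat list list" where "L_7 = [[0,1,6],[1,2,3],[1,2,3],[1,3,4],[1,3,4],[0,1,5],[0,1,6]]"




definition dsum :: "nat \<Rightarrow> (nat \<Rightarrow> nat \<Rightarrow> bool) \<Rightarrow> nat \<Rightarrow> (nat \<Rightarrow> nat \<Rightarrow> bool) \<Rightarrow> nat \<Rightarrow> nat \<Rightarrow> bool" where
  "dsum n W n' W' = (\<lambda>i j. (i < n \<and> j < n \<and> W i j) \<or>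
      (n \<le> i \<and> n \<le> j \<and> i < n + n' \<and> j < n + n' \<and> W' (i - n) (j - n)))"

definition good :: "nat \<Rightarrow> (nat \<Rightarrow> nat \<Rightarrow> bool) \<Rightarrow> (nat \<Rightarrow> bool) \<Rightarrow> nat \<Rightarrow> bool" where
  "good n W P b \<longleftrightarrow> is_wiring n W \<and> (\<forall>j<n. P (vdeg n W j)) \<and> M n W (\<lambda>_. False) \<le> b"

lemma Y_restrict: "Y n W x = Y n W (\<lambda>j. j < n \<and> x j)"
proof -
  have "\<And>i. {j. j < n \<and> W i j \<and> x j} = {j. j < n \<and> W i j \<and> (j < n \<and> x j)}" by auto
  then show ?thesis unfolding Y_def by simp
qed

lemma card_shift: "card ((\<lambda>j. j + n) ` S) = card (S :: nat set)"
  by (rule card_image) (auto simp: inj_on_def)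

lemma dsum_wiring:
  assumes "is_wiring n W" "is_wiring n' W'"
  shows "is_wiring (n + n') (dsum n W n' W')"
  using assms unfolding is_wiring_def is_matrix_def dsum_def
  by (metis add_diff_inverse_nat add_less_cancel_left le_add1 less_le_trans not_less)

lemma dsum_vdeg:
  assumes "is_matrix n W" "j < n + n'"
  shows "vdeg (n + n') (dsum n W n' W') j = (if j < n then vdeg n W j else vdeg n' W' (j - n))"
proof (cases "j < n")
  case True
  have "{i. i < n + n' \<and> dsum n W n' W' i j} = {i. i < n \<and> W i j}"
    using True assms(1) unfolding dsum_def is_matrix_def by auto
  then show ?thesis using True by (simp add: vdeg_def)
next
  case False
  have "{i. i < n + n' \<and> dsum n W n' W' i j} = (\<lambda>i. i + n) ` {i. i < n' \<and> W' i (j - n)}"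
  proof
    show "{i. i < n + n' \<and> dsum n W n' W' i j} \<subseteq> (\<lambda>i. i + n) ` {i. i < n' \<and> W' i (j - n)}"
    proof
      fix i assume i: "i \<in> {i. i < n + n' \<and> dsum n W n' W' i j}"
      then have "n \<le> i" "i < n + n'" "W' (i - n) (j - n)" using False unfolding dsum_def by auto
      then show "i \<in> (\<lambda>i. i + n) ` {i. i < n' \<and> W' i (j - n)}"
        by (intro image_eqI[of _ _ "i - n"]) auto
    qed
    show "(\<lambda>i. i + n) ` {i. i < n' \<and> W' i (j - n)} \<subseteq> {i. i < n + n' \<and> dsum n W n' W' i j}"
      using False assms(2) unfolding dsum_def by auto
  qed
  then show ?thesis using False by (simp add: vdeg_def card_shift)
qed

lemma dsum_Y:
  assumes "is_matrix n W"
  shows "Y (n + n') (dsum n W n' W') x = Y n W x \<union> (\<lambda>i. i + n) ` Y n' W' (\<lambda>j. x (j + n))"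
proof -
  let ?D = "dsum n W n' W'"
  have lo: "\<And>i. i < n \<Longrightarrow> {j. j < n + n' \<and> ?D i j \<and> x j} = {j. j < n \<and> W i j \<and> x j}"
    using assms unfolding dsum_def is_matrix_def by auto
  have hi: "\<And>i. n \<le> i \<Longrightarrow> i < n + n' \<Longrightarrow> card {j. j < n + n' \<and> ?D i j \<and> x j} = card {j. j < n' \<and> W' (i - n) j \<and> x (j + n)}"
  proof -
    fix i assume i: "n \<le> i" and i2: "i < n + n'"
    have "{j. j < n + n' \<and> ?D i j \<and> x j} = (\<lambda>j. j + n) ` {j. j < n' \<and> W' (i - n) j \<and> x (j + n)}"
    proof
      show "{j. j < n + n' \<and> ?D i j \<and> x j} \<subseteq> (\<lambda>j. j + n) ` {j. j < n' \<and> W' (i - n) j \<and> x (j + n)}"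
      proof
        fix j assume "j \<in> {j. j < n + n' \<and> ?D i j \<and> x j}"
        then have "n \<le> j" "j < n + n'" "W' (i - n) (j - n)" "x j" using i unfolding dsum_def by auto
        then show "j \<in> (\<lambda>j. j + n) ` {j. j < n' \<and> W' (i - n) j \<and> x (j + n)}"
          by (intro image_eqI[of _ _ "j - n"]) auto
      qed
      show "(\<lambda>j. j + n) ` {j. j < n' \<and> W' (i - n) j \<and> x (j + n)} \<subseteq> {j. j < n + n' \<and> ?D i j \<and> x j}"
        using i i2 unfolding dsum_def by auto
    qed
    then show "card {j. j < n + n' \<and> ?D i j \<and> x j} = card {j. j < n' \<and> W' (i - n) j \<and> x (j + n)}"
      by (simp add: card_shift)
  qed
  show ?thesis
  proof (rule set_eqI)
    fix i
    show "i \<in> Y (n + n') ?D x \<longleftrightarrow> i \<in> Y n W x \<union> (\<lambda>i. i + n) ` Y n' W' (\<lambda>j. x (j + n))"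
    proof (cases "i < n")
      case True
      then show ?thesis using lo[OF True] unfolding Y_def by auto
    next
      case False
      have "i \<in> (\<lambda>i. i + n) ` Y n' W' (\<lambda>j. x (j + n)) \<longleftrightarrow> i - n \<in> Y n' W' (\<lambda>j. x (j + n))"
        using False by (auto intro: image_eqI[of _ _ "i - n"])
      show ?thesis
      proof (cases "i < n + n'")
        case True
        then show ?thesis using False hi[of i] \<open>_ \<longleftrightarrow> _\<close> unfolding Y_def by auto
      next
        case F2: False
        then show ?thesis using False \<open>_ \<longleftrightarrow> _\<close> unfolding Y_def by auto
      qed
    qed
  qed
qed

lemma dsum_M:
  assumes "is_matrix n W"
  shows "M (n + n') (dsum n W n' W') (\<lambda>_. False) \<le> M n W (\<lambda>_. False) + M n' W' (\<lambda>_. False)"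
proof (rule M_le)
  fix x
  have "card (Y (n + n') (dsum n W n' W') x) \<le> card (Y n W x) + card ((\<lambda>i. i + n) ` Y n' W' (\<lambda>j. x (j + n)))"
    unfolding dsum_Y[OF assms] by (rule card_Un_le)
  also have "\<dots> = card (Y n W (\<lambda>j. j < n \<and> x j)) + card (Y n' W' (\<lambda>j. j < n' \<and> x (j + n)))"
    by (simp add: card_shift Y_restrict[of n W x] Y_restrict[of n' W' "\<lambda>j. x (j + n)"])
  also have "\<dots> \<le> M n W (\<lambda>_. False) + M n' W' (\<lambda>_. False)"
    using M_ge[of n "\<lambda>j. j < n \<and> x j" W "\<lambda>_. False"] M_ge[of n' "\<lambda>j. j < n' \<and> x (j + n)" W' "\<lambda>_. False"]
    by (simp add: supp_def weight_Y)
  finally show "weight_Wxc (n + n') (dsum n W n' W') x (\<lambda>_. False) \<le> M n W (\<lambda>_. False) + M n' W' (\<lambda>_. False)"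
    by (simp add: weight_Y)
qed

lemma dsum_good:
  assumes "good n W P b" "good n' W' P b'"
  shows "good (n + n') (dsum n W n' W') P (b + b')"
proof -
  have w: "is_wiring n W" "is_wiring n' W'" using assms by (auto simp: good_def)
  then have m: "is_matrix n W" by (simp add: is_wiring_def)
  have "\<forall>j<n + n'. P (vdeg (n + n') (dsum n W n' W') j)"
    using assms dsum_vdeg[OF m] unfolding good_def by auto
  moreover have "M (n + n') (dsum n W n' W') (\<lambda>_. False) \<le> b + b'"
    using dsum_M[OF m, of n' W'] assms unfolding good_def by linarith
  ultimately show ?thesis using dsum_wiring[OF w] by (simp add: good_def)
qed

primrec rep :: "nat list list \<Rightarrow> nat \<Rightarrow> nat \<Rightarrow> nat \<Rightarrow> bool" where
  "rep L 0 = (\<lambda>i j. False)"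
| "rep L (Suc q) = dsum (length L) (blk L) (q * length L) (rep L q)"

lemma good_empty: "good 0 (\<lambda>i j. False) P 0"
  using M_le_n[of 0 "\<lambda>i j. False" "\<lambda>_. False"]
  by (simp add: good_def is_wiring_def is_matrix_def)

lemma rep_good:
  assumes "good (length L) (blk L) P b"
  shows "good (q * length L) (rep L q) P (q * b)"
proof (induction q)
  case 0
  then show ?case using good_empty by simp
next
  case (Suc q)
  from dsum_good[OF assms Suc] show ?case by (simp add: add.commute)
qed

lemma blk_good:
  assumes "goodblk L" "\<forall>j\<in>set [0..<length L]. P (length (L ! j))"
    "\<forall>xs\<in>set (List.n_lists (length L) [True, False]). wl L xs \<le> b"
  shows "good (length L) (blk L) P b"
  using blk_wiring[OF assms(1)] blk_vdeg[OF assms(1)] assms(2) M_blk[OF assms(3)]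
  by (simp add: good_def)




abbreviation "P2 \<equiv> (\<lambda>d::nat. d \<le> 2)"
abbreviation "P3 \<equiv> (\<lambda>d::nat. d = 3)"

lemma g_cyc: "good 3 (blk L_cyc) P2 2"
proof -
  have "good (length L_cyc) (blk L_cyc) P2 2"
    by (rule blk_good; unfold L_cyc_def goodblk_def wl_def; code_simp)
  moreover have "length L_cyc = 3" by (simp add: L_cyc_def)
  ultimately show ?thesis by (simp only:)
qed
lemma g_1: "good 1 (blk L_1) P2 1"
proof -
  have "good (length L_1) (blk L_1) P2 1"
    by (rule blk_good; unfold L_1_def goodblk_def wl_def; code_simp)
  moreover have "length L_1 = 1" by (simp add: L_1_def)
  ultimately show ?thesis by (simp only:)
qed
lemma g_2: "good 2 (blk L_2) P2 2"
proof -
  have "good (length L_2) (blk L_2) P2 2"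
    by (rule blk_good; unfold L_2_def goodblk_def wl_def; code_simp)
  moreover have "length L_2 = 2" by (simp add: L_2_def)
  ultimately show ?thesis by (simp only:)
qed
lemma g_3: "good 3 (blk L_3) P3 3"
proof -
  have "good (length L_3) (blk L_3) P3 3"
    by (rule blk_good; unfold L_3_def goodblk_def wl_def; code_simp)
  moreover have "length L_3 = 3" by (simp add: L_3_def)
  ultimately show ?thesis by (simp only:)
qed
lemma g_4: "good 4 (blk L_4) P3 3"
proof -
  have "good (length L_4) (blk L_4) P3 3"
    by (rule blk_good; unfold L_4_def goodblk_def wl_def; code_simp)
  moreover have "length L_4 = 4" by (simp add: L_4_def)
  ultimately show ?thesis by (simp only:)
qed
lemma g_5: "good 5 (blk L_5) P3 4"
proof -
  have "good (length L_5) (blk L_5) P3 4"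
    by (rule blk_good; unfold L_5_def goodblk_def wl_def; code_simp)
  moreover have "length L_5 = 5" by (simp add: L_5_def)
  ultimately show ?thesis by (simp only:)
qed
lemma g_6: "good 6 (blk L_6) P3 4"
proof -
  have "good (length L_6) (blk L_6) P3 4"
    by (rule blk_good; unfold L_6_def goodblk_def wl_def; code_simp)
  moreover have "length L_6 = 6" by (simp add: L_6_def)
  ultimately show ?thesis by (simp only:)
qed
lemma g_7: "good 7 (blk L_7) P3 5"
proof -
  have "good (length L_7) (blk L_7) P3 5"
    by (rule blk_good; unfold L_7_def goodblk_def wl_def; code_simp)
  moreover have "length L_7 = 7" by (simp add: L_7_def)
  ultimately show ?thesis by (simp only:)
qed


lemma good_A2: "good n W P2 b \<Longrightarrow> W \<in> A n 2 \<and> M n W (\<lambda>_. False) \<le> b"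
  by (simp add: good_def A_def)

lemma good_A3: "good n W P3 b \<Longrightarrow> W \<in> A_star n 3 \<and> M n W (\<lambda>_. False) \<le> b"
  by (simp add: good_def A_star_def)

lemma C2: "\<exists>W. W \<in> A n 2 \<and> 3 * M n W (\<lambda>_. False) \<le> 2 * n + 2"
proof -
  define q where "q = n div 3"
  define r where "r = n mod 3"
  have n: "q * 3 + r = n" unfolding q_def r_def by simp
  have g: "good (q * 3) (rep L_cyc q) P2 (q * 2)"
  proof -
    have lc: "length L_cyc = 3" by (simp add: L_cyc_def)
    show ?thesis using rep_good[of L_cyc P2 2 q] g_cyc lc by simp
  qed
  have fin: "good n W P2 b \<Longrightarrow> 3 * b \<le> 2 * n + 2 \<Longrightarrow> ?thesis" for W b
    using good_A2[of n W b] by (intro exI[of _ W]) auto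
  have "r = 0 \<or> r = 1 \<or> r = 2" unfolding r_def by arith
  then show ?thesis
  proof (elim disjE)
    assume r: "r = 0"
    have e: "q * 3 = n" using n r by simp
    have "good n (rep L_cyc q) P2 (q * 2)" using g unfolding e .
    then show ?thesis by (rule fin) (use e in simp)
  next
    assume r: "r = 1"
    have "good (q * 3 + 1) (dsum (q * 3) (rep L_cyc q) 1 (blk L_1)) P2 (q * 2 + 1)"
      by (rule dsum_good[OF g g_1])
    moreover have e: "q * 3 + 1 = n" using n r by simp
    ultimately have "good n (dsum (q * 3) (rep L_cyc q) 1 (blk L_1)) P2 (q * 2 + 1)" by simp
    then show ?thesis by (rule fin) (use e in simp)
  next
    assume r: "r = 2"
    have "good (q * 3 + 2) (dsum (q * 3) (rep L_cyc q) 2 (blk L_2)) P2 (q * 2 + 2)"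
      by (rule dsum_good[OF g g_2])
    moreover have e: "q * 3 + 2 = n" using n r by simp
    ultimately have "good n (dsum (q * 3) (rep L_cyc q) 2 (blk L_2)) P2 (q * 2 + 2)" by simp
    then show ?thesis by (rule fin) (use e in simp)
  qed
qed

lemma finish3:
  assumes "good n W P3 b" "n mod 6 \<noteq> 3 \<longrightarrow> 3 * b \<le> 2 * n + 2" "n mod 6 = 3 \<longrightarrow> 3 * b \<le> 2 * n + 3"
  shows "\<exists>W. W \<in> A_star n 3 \<and> (n mod 6 \<noteq> 3 \<longrightarrow> 3 * M n W (\<lambda>_. False) \<le> 2 * n + 2)
     \<and> (n mod 6 = 3 \<longrightarrow> 3 * M n W (\<lambda>_. False) \<le> 2 * n + 3)"
proof -
  have "W \<in> A_star n 3" "M n W (\<lambda>_. False) \<le> b" using good_A3[OF assms(1)] by auto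
  then show ?thesis using assms(2,3) by (intro exI[of _ W]) linarith
qed

lemma C3:
  assumes "n \<ge> 3"
  shows "\<exists>W. W \<in> A_star n 3 \<and> (n mod 6 \<noteq> 3 \<longrightarrow> 3 * M n W (\<lambda>_. False) \<le> 2 * n + 2)
     \<and> (n mod 6 = 3 \<longrightarrow> 3 * M n W (\<lambda>_. False) \<le> 2 * n + 3)"
proof -
  define q where "q = n div 6"
  define r where "r = n mod 6"
  have n: "q * 6 + r = n" unfolding q_def r_def by simp
  have g: "\<And>p. good (p * 6) (rep L_6 p) P3 (p * 4)"
  proof -
    fix p
    have lc: "length L_6 = 6" by (simp add: L_6_def)
    show "good (p * 6) (rep L_6 p) P3 (p * 4)" using rep_good[of L_6 P3 4 p] g_6 lc by simp
  qed
  have "r = 0 \<or> r = 1 \<or> r = 2 \<or> r = 3 \<or> r = 4 \<or> r = 5" unfolding r_def by arith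
  then show ?thesis
  proof (elim disjE)
    assume r: "r = 0"
    have e: "q * 6 = n" using n r by simp
    have "good n (rep L_6 q) P3 (q * 4)" using g[of q] unfolding e .
    then show ?thesis by (rule finish3) (use n r r_def in auto)
  next
    assume r: "r = 1"
    then have q: "q \<ge> 1" using n assms by simp
    have "good ((q - 1) * 6 + 7) (dsum ((q - 1) * 6) (rep L_6 (q - 1)) 7 (blk L_7)) P3 ((q - 1) * 4 + 5)"
      by (rule dsum_good[OF g g_7])
    moreover have e: "(q - 1) * 6 + 7 = n" using n r q by simp
    ultimately have "good n (dsum ((q - 1) * 6) (rep L_6 (q - 1)) 7 (blk L_7)) P3 ((q - 1) * 4 + 5)" by simp
    then show ?thesis by (rule finish3) (use e q r r_def in auto)
  next
    assume r: "r = 2"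
    then have q: "q \<ge> 1" using n assms by simp
    have "good ((q - 1) * 6 + (4 + 4)) (dsum ((q - 1) * 6) (rep L_6 (q - 1)) (4 + 4) (dsum 4 (blk L_4) 4 (blk L_4))) P3 ((q - 1) * 4 + (3 + 3))"
      by (rule dsum_good[OF g dsum_good[OF g_4 g_4]])
    moreover have e: "(q - 1) * 6 + (4 + 4) = n" using n r q by simp
    ultimately have "good n (dsum ((q - 1) * 6) (rep L_6 (q - 1)) (4 + 4) (dsum 4 (blk L_4) 4 (blk L_4))) P3 ((q - 1) * 4 + (3 + 3))" by simp
    then show ?thesis by (rule finish3) (use e q r r_def in auto)
  next
    assume r: "r = 3"
    have "good (q * 6 + 3) (dsum (q * 6) (rep L_6 q) 3 (blk L_3)) P3 (q * 4 + 3)"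
      by (rule dsum_good[OF g g_3])
    moreover have e: "q * 6 + 3 = n" using n r by simp
    ultimately have "good n (dsum (q * 6) (rep L_6 q) 3 (blk L_3)) P3 (q * 4 + 3)" by simp
    then show ?thesis by (rule finish3) (use e r r_def in auto)
  next
    assume r: "r = 4"
    have "good (q * 6 + 4) (dsum (q * 6) (rep L_6 q) 4 (blk L_4)) P3 (q * 4 + 3)"
      by (rule dsum_good[OF g g_4])
    moreover have e: "q * 6 + 4 = n" using n r by simp
    ultimately have "good n (dsum (q * 6) (rep L_6 q) 4 (blk L_4)) P3 (q * 4 + 3)" by simp
    then show ?thesis by (rule finish3) (use e r r_def in auto)
  next
    assume r: "r = 5"
    have "good (q * 6 + 5) (dsum (q * 6) (rep L_6 q) 5 (blk L_5)) P3 (q * 4 + 4)"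
      by (rule dsum_good[OF g g_5])
    moreover have e: "q * 6 + 5 = n" using n r by simp
    ultimately have "good n (dsum (q * 6) (rep L_6 q) 5 (blk L_5)) P3 (q * 4 + 4)" by simp
    then show ?thesis by (rule finish3) (use e r r_def in auto)
  qed
qed

lemma img_fin: "finite ((\<lambda>W. M n W (\<lambda>_. False)) ` S)"
  by (rule finite_subset[of _ "{..n}"]) (auto simp: M_le_n)

lemma Min_in_img: "W \<in> S \<Longrightarrow> \<exists>V\<in>S. Min ((\<lambda>W. M n W (\<lambda>_. False)) ` S) = M n V (\<lambda>_. False)"
proof -
  assume "W \<in> S"
  then have "(\<lambda>W. M n W (\<lambda>_. False)) ` S \<noteq> {}" by blast
  from Min_in[OF img_fin this] show ?thesis by blast
qed

lemma Min_le_img: "W \<in> S \<Longrightarrow> Min ((\<lambda>W. M n W (\<lambda>_. False)) ` S) \<le> M n W (\<lambda>_. False)"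
  by (rule Min_le[OF img_fin]) blast




lemma ex1: "k \<ge> 1 \<and> n = 6 * k - 3 \<Longrightarrow> n mod 6 = (3::nat)"
proof -
  assume h: "k \<ge> 1 \<and> n = 6 * k - 3"
  then have "n = 6 * (k - 1) + 3" by (cases k) auto
  then show ?thesis by simp
qed
lemma ex2: "n mod 6 = (3::nat) \<Longrightarrow> n div 6 + 1 \<ge> 1 \<and> n = 6 * (n div 6 + 1) - 3"
proof -
  assume h: "n mod 6 = 3"
  have e: "n = 6 * (n div 6) + 3" using h div_mult_mod_eq[of n 6] by linarith
  have "6 * (n div 6 + 1) - 3 = 6 * (n div 6) + 3" by simp
  then show ?thesis using e by simp
qed
lemma sq1: "2 * n \<le> 3 * a \<Longrightarrow> 3 * b \<le> 2 * n + 2 \<Longrightarrow> a \<le> b \<Longrightarrow> a = (b::nat)"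
  by presburger
lemma sq2: "3 * MM \<le> 2 * n + 3 \<Longrightarrow> 4 * k - 1 \<le> m \<Longrightarrow> m \<le> MM \<Longrightarrow> k \<ge> 1 \<and> n = 6 * k - 3 \<Longrightarrow> m = 4 * k - (1::nat)"
  by presburger
lemma sq3: "3 * a \<le> 2 * n + 2 \<Longrightarrow> 3 * b \<le> 2 * n + 2 \<Longrightarrow> 2 * n \<le> 3 * a \<Longrightarrow> 2 * n \<le> 3 * b \<Longrightarrow> a = (b::nat)"
  by presburger

theorem theorem1p2:
  fixes n :: nat
  assumes "n \<ge> 1"
  shows "mu n 3 = mu n 2 \<and>
         (n \<ge> 3 \<longrightarrow>
            (\<forall>k::nat. k \<ge> 1 \<and> n = 6 * k - 3 \<longrightarrow> mu_star n 3 = 4 * k - 1) \<and>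
            ((\<nexists>k::nat. k \<ge> 1 \<and> n = 6 * k - 3) \<longrightarrow> mu_star n 3 = mu n 3))"
proof -
  obtain W2 where W2: "W2 \<in> A n 2" "3 * M n W2 (\<lambda>_. False) \<le> 2 * n + 2" using C2 by blast
  have sub: "A n 2 \<subseteq> A n 3" by (auto simp: A_def)
  have subs: "A_star n 3 \<subseteq> A n 3" by (auto simp: A_def A_star_def)
  have m2: "3 * mu n 2 \<le> 2 * n + 2"
    using Min_le_img[OF W2(1), of n] W2(2) unfolding mu_def by linarith
  obtain V2 where V2: "V2 \<in> A n 2" "mu n 2 = M n V2 (\<lambda>_. False)"
    using Min_in_img[OF W2(1), of n] unfolding mu_def by blast
  have V23: "V2 \<in> A n 3" using V2(1) sub by blast
  have "mu n 3 \<le> M n V2 (\<lambda>_. False)" using Min_le_img[OF V23, of n] unfolding mu_def .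
  then have m32: "mu n 3 \<le> mu n 2" using V2(2) by linarith
  have W23: "W2 \<in> A n 3" using W2(1) sub by blast
  obtain V3 where V3: "V3 \<in> A n 3" "mu n 3 = M n V3 (\<lambda>_. False)"
    using Min_in_img[OF W23, of n] unfolding mu_def by blast
  have m3: "2 * n \<le> 3 * mu n 3" using lower[OF V3(1)] V3(2) by simp
  have eq: "mu n 3 = mu n 2" using sq1[OF m3 m2 m32] .
  have star: "(\<forall>k::nat. k \<ge> 1 \<and> n = 6 * k - 3 \<longrightarrow> mu_star n 3 = 4 * k - 1) \<and>
            ((\<nexists>k::nat. k \<ge> 1 \<and> n = 6 * k - 3) \<longrightarrow> mu_star n 3 = mu n 3)" if n3: "n \<ge> 3"
  proof -
    obtain W3 where W3: "W3 \<in> A_star n 3" "n mod 6 \<noteq> 3 \<longrightarrow> 3 * M n W3 (\<lambda>_. False) \<le> 2 * n + 2"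
      "n mod 6 = 3 \<longrightarrow> 3 * M n W3 (\<lambda>_. False) \<le> 2 * n + 3" using C3[OF n3] by blast
    have ms_le: "mu_star n 3 \<le> M n W3 (\<lambda>_. False)"
      using Min_le_img[OF W3(1), of n] unfolding mu_star_def by simp
    obtain U where U: "U \<in> A_star n 3" "mu_star n 3 = M n U (\<lambda>_. False)"
      using Min_in_img[OF W3(1), of n] unfolding mu_star_def by blast
    have U3: "U \<in> A n 3" using U(1) subs by blast
    have ms_ge: "2 * n \<le> 3 * mu_star n 3" using lower[OF U3] U(2) by simp
    show ?thesis
    proof
      show "\<forall>k::nat. k \<ge> 1 \<and> n = 6 * k - 3 \<longrightarrow> mu_star n 3 = 4 * k - 1"
      proof (intro allI impI)
        fix k :: nat assume k: "k \<ge> 1 \<and> n = 6 * k - 3"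
        then have "n mod 6 = 3" by (rule ex1)
        then have a1: "3 * M n W3 (\<lambda>_. False) \<le> 2 * n + 3" using W3(3) by simp
        have "4 * k - 1 \<le> M n U (\<lambda>_. False)" by (rule exc[OF U(1)]) (use k in auto)
        then have a2: "4 * k - 1 \<le> mu_star n 3" using U(2) by simp
        show "mu_star n 3 = 4 * k - 1" by (rule sq2[OF a1 a2 ms_le k])
      qed
      show "(\<nexists>k::nat. k \<ge> 1 \<and> n = 6 * k - 3) \<longrightarrow> mu_star n 3 = mu n 3"
      proof
        assume nk: "\<nexists>k::nat. k \<ge> 1 \<and> n = 6 * k - 3"
        have "n mod 6 \<noteq> 3"
        proof
          assume "n mod 6 = 3"
          then have "n div 6 + 1 \<ge> 1 \<and> n = 6 * (n div 6 + 1) - 3" by (rule ex2)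
          then show False using nk by blast
        qed
        then have "3 * M n W3 (\<lambda>_. False) \<le> 2 * n + 2" using W3(2) by simp
        then have "3 * mu_star n 3 \<le> 2 * n + 2" using ms_le by linarith
        moreover have "3 * mu n 3 \<le> 2 * n + 2" using m2 eq by simp
        ultimately show "mu_star n 3 = mu n 3" using sq3 ms_ge m3 by metis
      qed
    qed
  qed
  show ?thesis using eq star by blast
qed


end
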